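(* Let $n\ge1$ be a natural number, let $a,b,\alpha,\beta$ be variables (with $\beta a-\alpha b\neq0$), and write $\Psi_r(n)=\Psi\left(\begin{array}{cc|c} a & b & n \\ \alpha & \beta & r \end{array}\right)$, $\Phi_r(n)=\Phi\left(\begin{array}{cc|c} a & b & n \\ \alpha & \beta & r \end{array}\right)$. Let $D=\alpha\frac{\partial}{\partial a}+\beta\frac{\partial}{\partial b}$ (so $\alpha,\beta$ are held constant). Then \[ \Psi_r(n)=-\frac{1}{r}\,D\,\Psi_{r-1}(n)\quad\text{for }1\le r\le\lfloor n/2\rfloor,\qquad \Phi_r(n)=-\frac{1}{r}\,D\,\Phi_{r-1}(n)\quad\text{for }1\le r\le\lfloor (n-1)/2\rfloor. \]
   Context: $\delta(m)=1$ for $m$ odd, $0$ for $m$ even; $\lfloor\cdot\rfloor$ is the floor. For indeterminates $a,b,\alpha,\beta$ and $n\ge1$, $\Psi\left(\begin{array}{cc|c} a & b & n \\ \alpha & \beta & r \end{array}\right)$ ($0\le r\le\lfloor n/2\rfloor$) and $\Phi\left(\begin{array}{cc|c} a & b & n \\ \alpha & \beta & r \end{array}\right)$ ($0\le r\le\lfloor (n-1)/2\rfloor$) are the unique polynomials in $\mathbb{Z}[a,b,\alpha,\beta]$ such that, identically in $x,y$, $(\beta a-\alpha b)^{\lfloor n/2\rfloor}\frac{x^n+y^n}{(x+y)^{\delta(n)}}=\sum_{r}\Psi\left(\begin{array}{cc|c} a & b & n \\ \alpha & \beta & r \end{array}\right)(\alpha x^2+\beta xy+\alpha y^2)^{\lfloor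 n/2\rfloor-r}(ax^2+bxy+ay^2)^r$ and $(\beta a-\alpha b)^{\lfloor (n-1)/2\rfloor}\frac{x^n-y^n}{(x-y)(x+y)^{\delta(n-1)}}=\sum_{r}\Phi\left(\begin{array}{cc|c} a & b & n \\ \alpha & \beta & r \end{array}\right)(\alpha x^2+\beta xy+\alpha y^2)^{\lfloor (n-1)/2\rfloor-r}(ax^2+bxy+ay^2)^r$. *)

theory Defs
  imports "HOL-Computational_Algebra.Polynomial"
begin

text \<open>Polynomials in Z[a,b,alpha,beta], represented as nested univariate polynomials.
  Innermost variable: a; then b; then alpha; outermost: beta.\<close>

type_synonym mpoly = "int poly poly poly poly"

definition ev4 :: "mpoly \<Rightarrow> int \<Rightarrow> int \<Rightarrow> int \<Rightarrow> int \<Rightarrow> int" where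
  "ev4 P a b al be = poly (poly (poly (poly P [:[:[:be:]:]:]) [:[:al:]:]) [:b:]) a"

definition var_alpha :: mpoly where "var_alpha = [:[:0, 1:]:]"
definition var_beta :: mpoly where "var_beta = [:0, 1:]"

definition deriv_a :: "mpoly \<Rightarrow> mpoly" where
  "deriv_a P = map_poly (map_poly (map_poly pderiv)) P"
definition deriv_b :: "mpoly \<Rightarrow> mpoly" where
  "deriv_b P = map_poly (map_poly pderiv) P"

definition Dop :: "mpoly \<Rightarrow> mpoly" where
  "Dop P = var_alpha * deriv_a P + var_beta * deriv_b P"

definition delta :: "nat \<Rightarrow> nat" where
  "delta m = (if odd m then 1 else 0)"

text \<open>Defining identities (denominators cleared), required identically in a,b,alpha,beta,x,y.\<close>
definition is_Psi :: "nat \<Rightarrow> (nat \<Rightarrow> mpoly) \<Rightarrow> bool" where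
  "is_Psi n f \<longleftrightarrow> (\<forall>r > n div 2. f r = 0) \<and>
     (\<forall>a b al be x y :: int.
        (be * a - al * b) ^ (n div 2) * (x ^ n + y ^ n) =
        (x + y) ^ delta n *
        (\<Sum>r\<le>n div 2. ev4 (f r) a b al be *
            (al * x^2 + be * x * y + al * y^2) ^ (n div 2 - r) *
            (a * x^2 + b * x * y + a * y^2) ^ r))"

definition is_Phi :: "nat \<Rightarrow> (nat \<Rightarrow> mpoly) \<Rightarrow> bool" where
  "is_Phi n f \<longleftrightarrow> (\<forall>r > (n - 1) div 2. f r = 0) \<and>
     (\<forall>a b al be x y :: int.
        (be * a - al * b) ^ ((n - 1) div 2) * (x ^ n - y ^ n) =
        (x - y) * (x + y) ^ delta (n - 1) *
        (\<Sum>r\<le>(n - 1) div 2. ev4 (f r) a b al be *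
            (al * x^2 + be * x * y + al * y^2) ^ ((n - 1) div 2 - r) *
            (a * x^2 + b * x * y + a * y^2) ^ r))"

definition Psi :: "nat \<Rightarrow> nat \<Rightarrow> mpoly" where
  "Psi n = (THE f. is_Psi n f)"

definition Phi :: "nat \<Rightarrow> nat \<Rightarrow> mpoly" where
  "Phi n = (THE f. is_Phi n f)"

end

theory Submission
  imports Defs "HOL-Computational_Algebra.Fundamental_Theorem_Algebra"
begin


locale derivation =
  fixes F :: "'a::comm_ring_1 \<Rightarrow> 'a"
  assumes F_add: "F (x + y) = F x + F y"
    and F_mult: "F (x * y) = x * F y + F x * y"
begin
lemma F_0[simp]: "F 0 = 0" using F_add[of 0 0] by simp
lemma F_1[simp]: "F 1 = 0" using F_mult[of 1 1] by simp
lemma F_minus: "F (- x) = - F x" using F_add[of x "-x"] by (simp add: eq_neg_iff_add_eq_0 add.commute)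
lemma F_diff: "F (x - y) = F x - F y" using F_add[of x "-y"] F_minus[of y] by simp
lemma F_sum: "F (sum g A) = (\<Sum>i\<in>A. F (g i))"
  by (induction A rule: infinite_finite_induct) (auto simp: F_add)
lemma F_of_nat[simp]: "F (of_nat k) = 0"
  by (induction k) (auto simp: F_add)
lemma F_numeral[simp]: "F (numeral k) = 0"
  using F_of_nat[of "numeral k"] by simp
lemma F_pow2: "F (x^2) = 2 * x * F x" by (simp add: power2_eq_square F_mult algebra_simps)

lemma map_derivation: "derivation (map_poly F)"
proof
  fix p q :: "'a poly"
  show "map_poly F (p + q) = map_poly F p + map_poly F q"
    by (rule poly_eqI) (simp add: coeff_map_poly F_add)
  show "map_poly F (p * q) = p * map_poly F q + map_poly F p * q"
    by (rule poly_eqI) (simp add: coeff_map_poly coeff_mult F_sum F_mult sum.distrib)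
qed
end

lemma pderiv_derivation: "derivation (pderiv :: 'a::idom poly \<Rightarrow> _)"
  by standard (auto simp: pderiv_add pderiv_mult algebra_simps)

lemma derivation_add:
  assumes "derivation F" "derivation G" shows "derivation (\<lambda>x. F x + G x)"
  using assms unfolding derivation_def by (auto simp: algebra_simps)

lemma derivation_scale:
  assumes "derivation F" shows "derivation (\<lambda>x. c * F x)"
  using assms unfolding derivation_def by (auto simp: algebra_simps)

lemma deriv_b_der: "derivation deriv_b"
  unfolding deriv_b_def[abs_def]
  by (rule derivation.map_derivation derivation.map_derivation[OF pderiv_derivation])+

lemma deriv_a_der: "derivation deriv_a"
  unfolding deriv_a_def[abs_def]
  by (rule derivation.map_derivation derivation.map_derivation derivation.map_derivation[OF pderiv_derivation])+

lemma Dop_der: "derivation Dop"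
  unfolding Dop_def[abs_def]
  by (intro derivation_add derivation_scale deriv_a_der deriv_b_der)

definition var_a :: mpoly where "var_a = [:[:[:[:0,1:]:]:]:]"
definition var_b :: mpoly where "var_b = [:[:[:0,1:]:]:]"

lemma Dop_vars: "Dop var_a = var_alpha" "Dop var_b = var_beta" "Dop var_alpha = 0" "Dop var_beta = 0"
  by (simp_all add: Dop_def deriv_a_def deriv_b_def var_a_def var_b_def var_alpha_def var_beta_def
      map_poly_pCons pderiv_pCons one_pCons)

lemma Dop0: "Dop 0 = 0" using Dop_der by (simp add: derivation.F_0)

definition Qh :: "mpoly poly" where "Qh = [:- var_b, var_beta:]"
definition Ph :: "mpoly poly" where "Ph = [:var_a, - var_alpha:]"

definition DD :: "mpoly poly \<Rightarrow> mpoly poly" where "DD p = map_poly Dop p + pderiv p"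

lemma DD_der: "derivation DD"
  unfolding DD_def[abs_def]
  by (intro derivation_add derivation.map_derivation Dop_der pderiv_derivation)

lemma DD_Qh: "DD Qh = 0" and DD_Ph: "DD Ph = 0"
  using Dop_der by (simp_all add: DD_def Qh_def Ph_def map_poly_pCons pderiv_pCons Dop_vars
     derivation.F_minus Dop0)

fun Wr :: "mpoly poly \<Rightarrow> mpoly poly \<Rightarrow> nat \<Rightarrow> mpoly poly" where
  "Wr w0 w1 0 = w0"
| "Wr w0 w1 (Suc 0) = w1"
| "Wr w0 w1 (Suc (Suc m)) = Qh * Wr w0 w1 (Suc m) - Ph^2 * Wr w0 w1 m"

lemma DD_Wr: "DD w0 = 0 \<Longrightarrow> DD w1 = 0 \<Longrightarrow> DD (Wr w0 w1 m) = 0"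
  by (induction w0 w1 m rule: Wr.induct)
    (simp_all add: derivation.F_diff[OF DD_der] derivation.F_mult[OF DD_der] DD_Qh DD_Ph
       power2_eq_square)

lemma Wr_rel: assumes "DD w0 = 0" "DD w1 = 0" "1 \<le> r"
  shows "of_nat r * coeff (Wr w0 w1 m) r = - Dop (coeff (Wr w0 w1 m) (r - 1))"
proof -
  have "coeff (DD (Wr w0 w1 m)) (r - 1) = 0" using DD_Wr[of w0 w1 m] assms by simp
  moreover have "coeff (DD (Wr w0 w1 m)) (r - 1) = Dop (coeff (Wr w0 w1 m) (r - 1)) + of_nat r * coeff (Wr w0 w1 m) r"
    using assms(3) Dop_der by (simp add: DD_def coeff_map_poly coeff_pderiv derivation.F_0)
  ultimately show ?thesis by (simp add: eq_neg_iff_add_eq_0 add.commute)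
qed

lemma DD_consts: "DD 1 = 0" "DD 2 = 0" using DD_der by (simp_all add: derivation.F_numeral derivation.F_1)

lemma degree_Wr: "degree w0 \<le> 0 \<Longrightarrow> degree w1 \<le> 1 \<Longrightarrow> degree (Wr w0 w1 m) \<le> m"
proof (induction w0 w1 m rule: Wr.induct)
  case (3 w0 w1 m)
  have q: "degree Qh \<le> 1" "degree Ph \<le> 1" by (simp_all add: Qh_def Ph_def)
  have "degree (Qh * Wr w0 w1 (Suc m)) \<le> Suc (Suc m)"
    using degree_mult_le[of Qh "Wr w0 w1 (Suc m)"] q 3 by simp
  moreover have "degree (Ph^2 * Wr w0 w1 m) \<le> Suc (Suc m)"
    using degree_mult_le[of "Ph^2" "Wr w0 w1 m"] degree_power_le[of Ph 2] q 3 by simp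
  ultimately show ?case using degree_diff_le by (simp add: degree_diff_le)
qed auto



lemma ev4_simps[simp]:
  "ev4 (P + Q) a b al be = ev4 P a b al be + ev4 Q a b al be"
  "ev4 (P - Q) a b al be = ev4 P a b al be - ev4 Q a b al be"
  "ev4 (P * Q) a b al be = ev4 P a b al be * ev4 Q a b al be"
  "ev4 (- P) a b al be = - ev4 P a b al be"
  "ev4 0 a b al be = 0" "ev4 1 a b al be = 1"
  "ev4 var_a a b al be = a" "ev4 var_b a b al be = b"
  "ev4 var_alpha a b al be = al" "ev4 var_beta a b al be = be"
  by (simp_all add: ev4_def var_a_def var_b_def var_alpha_def var_beta_def)

context fixes a b al be x y :: int begin

definition hev :: "mpoly poly \<Rightarrow> nat \<Rightarrow> int" where
  "hev F m = (\<Sum>r\<le>m. ev4 (coeff F r) a b al be *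
            (al * x^2 + be * x * y + al * y^2) ^ (m - r) *
            (a * x^2 + b * x * y + a * y^2) ^ r)"

lemma hev_add: "hev (F + G) m = hev F m + hev G m"
  by (simp add: hev_def algebra_simps sum.distrib)
lemma hev_diff: "hev (F - G) m = hev F m - hev G m"
  by (simp add: hev_def algebra_simps sum_subtractf)
lemma hev_smult: "hev (smult c F) m = ev4 c a b al be * hev F m"
  by (simp add: hev_def algebra_simps sum_distrib_left)
lemma hev_Suc: "degree F \<le> m \<Longrightarrow> hev F (Suc m) = (al * x^2 + be * x * y + al * y^2) * hev F m"
  by (simp add: hev_def coeff_eq_0 sum_distrib_left Suc_diff_le algebra_simps)
lemma hev_pCons: "hev (pCons 0 F) (Suc m) = (a * x^2 + b * x * y + a * y^2) * hev F m"
  unfolding hev_def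
  by (subst sum.atMost_Suc_shift) (simp add: sum_distrib_left algebra_simps)
lemma hev_lin: "degree F \<le> m \<Longrightarrow> hev ([:l, mu:] * F) (Suc m) =
   (ev4 l a b al be * (al * x^2 + be * x * y + al * y^2) + ev4 mu a b al be * (a * x^2 + b * x * y + a * y^2)) * hev F m"
  by (simp add: hev_add hev_smult hev_Suc hev_pCons algebra_simps)

fun Wn :: "int \<Rightarrow> int \<Rightarrow> nat \<Rightarrow> int" where
  "Wn c0 c1 0 = c0"
| "Wn c0 c1 (Suc 0) = c1"
| "Wn c0 c1 (Suc (Suc m)) = (x^2 + y^2) * Wn c0 c1 (Suc m) - (x*y)^2 * Wn c0 c1 m"

lemma hev_Wr: "degree w0 \<le> 0 \<Longrightarrow> degree w1 \<le> 1 \<Longrightarrow> hev w0 0 = c0 \<Longrightarrow>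
   hev w1 1 = (be * a - al * b) * c1 \<Longrightarrow>
   hev (Wr w0 w1 m) m = (be * a - al * b) ^ m * Wn c0 c1 m"
proof (induction w0 w1 m rule: Wr.induct)
  case (3 w0 w1 m)
  have d1: "degree (Wr w0 w1 (Suc m)) \<le> Suc m" "degree (Wr w0 w1 m) \<le> m"
    using degree_Wr 3 by blast+
  have d2: "degree (Ph * Wr w0 w1 m) \<le> Suc m"
  proof -
    have "degree Ph \<le> 1" by (simp add: Ph_def)
    then show ?thesis using degree_mult_le[of Ph "Wr w0 w1 m"] d1 by linarith
  qed
  have "hev (Wr w0 w1 (Suc (Suc m))) (Suc (Suc m)) =
     hev (Qh * Wr w0 w1 (Suc m)) (Suc (Suc m)) - hev (Ph * (Ph * Wr w0 w1 m)) (Suc (Suc m))"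
    by (simp add: hev_diff power2_eq_square mult.assoc)
  also have "\<dots> = ((be * a - al * b) * (x^2+y^2)) * hev (Wr w0 w1 (Suc m)) (Suc m)
      - ((be * a - al * b) * (x * y))^2 * hev (Wr w0 w1 m) m"
  proof -
    have e1: "hev (Qh * Wr w0 w1 (Suc m)) (Suc (Suc m)) = (- b * (al * x^2 + be * x * y + al * y^2) + be * (a * x^2 + b * x * y + a * y^2)) * hev (Wr w0 w1 (Suc m)) (Suc m)"
      unfolding Qh_def using hev_lin[OF d1(1), of "- var_b" var_beta] by simp
    have e2: "hev (Ph * (Ph * Wr w0 w1 m)) (Suc (Suc m)) = (a * (al * x^2 + be * x * y + al * y^2) - al * (a * x^2 + b * x * y + a * y^2)) * 
       ((a * (al * x^2 + be * x * y + al * y^2) - al * (a * x^2 + b * x * y + a * y^2)) * hev (Wr w0 w1 m) m)"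
      unfolding Ph_def using hev_lin[OF d2, of var_a "- var_alpha"] hev_lin[OF d1(2), of var_a "- var_alpha"]
      by (simp add: Ph_def)
    show ?thesis unfolding e1 e2 by (simp add: power2_eq_square algebra_simps)
  qed
  also have "\<dots> = (be * a - al * b) ^ Suc (Suc m) * Wn c0 c1 (Suc (Suc m))"
  proof -
    have i1: "hev (Wr w0 w1 (Suc m)) (Suc m) = (be * a - al * b) ^ Suc m * Wn c0 c1 (Suc m)"
      using 3 by blast
    have i2: "hev (Wr w0 w1 m) m = (be * a - al * b) ^ m * Wn c0 c1 m"
      using 3 by blast
    show ?thesis unfolding i1 i2 by (simp add: algebra_simps power2_eq_square)
  qed
  finally show ?case .
qed auto

end

lemma geo_rec: "(A::int) * (X^2)^(Suc (Suc m)) + B * (Y^2)^(Suc (Suc m)) =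
   (X^2 + Y^2) * (A * (X^2)^(Suc m) + B * (Y^2)^(Suc m)) - (X*Y)^2 * (A * (X^2)^m + B * (Y^2)^m)"
  by (simp add: algebra_simps power2_eq_square)

lemma Wn_unique:
  assumes "\<And>m. s (Suc (Suc m)) = (x^2 + y^2) * s (Suc m) - (x*y)^2 * s m"
    and "s 0 = K * c0" "s 1 = K * c1"
  shows "s m = K * Wn x y c0 c1 m"
proof -
  have "s m = K * Wn x y c0 c1 m \<and> s (Suc m) = K * Wn x y c0 c1 (Suc m)"
  proof (induction m)
    case 0 then show ?case using assms by simp
  next
    case (Suc m)
    then show ?case by (simp only: assms(1) Wn.simps) (simp add: algebra_simps)
  qed
  then show ?thesis by simp
qed



lemma poly_inf_roots:
  fixes p :: "'a::idom poly" and f :: "'b \<Rightarrow> 'a"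
  assumes "infinite (UNIV :: 'b set)" "inj f" "\<And>i. poly p (f i) = 0"
  shows "p = 0"
proof (rule ccontr)
  assume "p \<noteq> 0"
  then have "finite {z. poly p z = 0}" by (rule poly_roots_finite)
  moreover have "range f \<subseteq> {z. poly p z = 0}" using assms(3) by auto
  ultimately have "finite (range f)" by (rule rev_finite_subset)
  then have "finite (UNIV :: 'b set)" using assms(2) finite_imageD by blast
  then show False using assms(1) by simp
qed

lemma ev4_zero:
  assumes "\<And>a b al be. ev4 P a b al be = 0" shows "P = 0"
proof -
  have 1: "poly (poly (poly P [:[:[:be:]:]:]) [:[:al:]:]) [:b:] = 0" for be al b
    using assms poly_all_0_iff_0 unfolding ev4_def by blast
  have 2: "poly (poly P [:[:[:be:]:]:]) [:[:al:]:] = 0" for be al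
    by (rule poly_inf_roots[of "\<lambda>b::int. [:b:]"]) (auto simp: inj_def 1)
  have 3: "poly P [:[:[:be:]:]:] = 0" for be
    by (rule poly_inf_roots[of "\<lambda>al::int. [:[:al:]:]"]) (auto simp: inj_def 2)
  show "P = 0"
    by (rule poly_inf_roots[of "\<lambda>be::int. [:[:[:be:]:]:]"]) (auto simp: inj_def 3)
qed

lemma indep:
  fixes U V :: "complex poly"
  assumes "poly U z = 0" "poly V z \<noteq> 0" "U \<noteq> 0"
  shows "(\<Sum>r\<le>m. smult (e r) (U^(m-r) * V^r)) = 0 \<Longrightarrow> r \<le> m \<Longrightarrow> e r = 0"
proof (induction m arbitrary: e r)
  case 0
  then show ?case by simp
next
  case (Suc m)
  have "poly (\<Sum>r\<le>Suc m. smult (e r) (U^(Suc m-r) * V^r)) z = 0" using Suc.prems by simp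
  moreover have "poly (\<Sum>r\<le>Suc m. smult (e r) (U^(Suc m-r) * V^r)) z = e (Suc m) * poly V z ^ Suc m"
    using assms(1) by (simp add: poly_sum Suc_diff_le)
  ultimately have em: "e (Suc m) = 0" using assms(2) by simp
  have "(\<Sum>r\<le>Suc m. smult (e r) (U^(Suc m-r) * V^r)) = U * (\<Sum>r\<le>m. smult (e r) (U^(m-r) * V^r))"
    using em by (simp add: sum_distrib_left Suc_diff_le algebra_simps)
  then have "(\<Sum>r\<le>m. smult (e r) (U^(m-r) * V^r)) = 0" using Suc.prems assms(3) by simp
  then show ?case using Suc.IH[of e r] em Suc.prems(2) by (cases "r = Suc m") auto
qed

lemma indep_int:
  fixes a b al be :: int and e :: "nat \<Rightarrow> int"
  assumes D: "be * a - al * b \<noteq> 0"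
    and H: "\<And>x::int. x \<ge> 2 \<Longrightarrow> (\<Sum>r\<le>m. e r * (al*x^2 + be*x + al)^(m-r) * (a*x^2+b*x+a)^r) = 0"
    and r: "r \<le> m"
  shows "e r = 0"
proof -
  define Uc where "Uc = [:complex_of_int al, of_int be, of_int al:]"
  define Vc where "Vc = [:complex_of_int a, of_int b, of_int a:]"
  define Qc where "Qc = (\<Sum>r\<le>m. smult (of_int (e r)) (Uc^(m-r) * Vc^r))"
  have pv: "poly Qc (of_int x) = of_int (\<Sum>r\<le>m. e r * (al*x^2 + be*x + al)^(m-r) * (a*x^2+b*x+a)^r)" for x
    by (simp add: Qc_def Uc_def Vc_def poly_sum algebra_simps power2_eq_square)
  have "Qc = 0"
  proof (rule poly_inf_roots[of "\<lambda>k::nat. complex_of_int (int k + 2)"])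
    show "inj (\<lambda>k::nat. complex_of_int (int k + 2))" by (auto simp: inj_def)
    show "poly Qc (complex_of_int (int k + 2)) = 0" for k
      using pv[of "int k + 2"] H[of "int k + 2"] by simp
  qed simp
  have nc: "\<not> constant (poly Uc)"
  proof
    assume "constant (poly Uc)"
    then have "poly Uc 0 = poly Uc 1" "poly Uc 0 = poly Uc (-1)" unfolding constant_def by blast+
    then have "al = 0" "be = 0" by (simp_all add: Uc_def)
    then show False using D by simp
  qed
  obtain z where z: "poly Uc z = 0" using fundamental_theorem_of_algebra[OF nc] by blast
  have U0: "Uc \<noteq> 0" using nc unfolding constant_def by auto
  have V0: "poly Vc z \<noteq> 0"
  proof
    assume v: "poly Vc z = 0"
    have "of_int a * poly Uc z - of_int al * poly Vc z = of_int (be * a - al * b) * z"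
      by (simp add: Uc_def Vc_def algebra_simps)
    then have "complex_of_int (be * a - al * b) * z = 0" using z v by simp
    then have "z = 0" using D by (simp del: of_int_diff of_int_mult)
    then have "al = 0" "a = 0" using z v by (simp_all add: Uc_def Vc_def)
    then show False using D by simp
  qed
  have "complex_of_int (e r) = 0"
    using indep[OF z V0 U0, of "\<lambda>r. complex_of_int (e r)" m r] \<open>Qc = 0\<close> r unfolding Qc_def by blast
  then show ?thesis by simp
qed



definition Dl :: mpoly where "Dl = var_beta * var_a - var_alpha * var_b"

lemma Dl_nz: "Dl \<noteq> 0"
proof
  assume "Dl = 0"
  then have "ev4 Dl 1 0 0 1 = 0" by simp
  then show False by (simp add: Dl_def)
qed

lemma unique_gen:
  fixes f g :: "nat \<Rightarrow> mpoly" and m :: nat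
  assumes H: "\<And>a b al be x. be * a - al * b \<noteq> 0 \<Longrightarrow> x \<ge> 2 \<Longrightarrow>
     (\<Sum>r\<le>m. ev4 (f r) a b al be * (al*x^2 + be*x + al)^(m-r) * (a*x^2+b*x+a)^r) =
     (\<Sum>r\<le>m. ev4 (g r) a b al be * (al*x^2 + be*x + al)^(m-r) * (a*x^2+b*x+a)^r)"
    and r: "r \<le> m"
  shows "f r = g r"
proof -
  have "(f r - g r) * Dl = 0"
  proof (rule ev4_zero)
    fix a b al be
    show "ev4 ((f r - g r) * Dl) a b al be = 0"
    proof (cases "be * a - al * b = 0")
      case True then show ?thesis by (simp add: Dl_def)
    next
      case False
      have "ev4 (f r) a b al be - ev4 (g r) a b al be = 0"
      proof (rule indep_int[OF False _ r])
        fix x :: int assume "x \<ge> 2"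
        from H[OF False this] show "(\<Sum>r\<le>m. (ev4 (f r) a b al be - ev4 (g r) a b al be) * (al*x^2 + be*x + al)^(m-r) * (a*x^2+b*x+a)^r) = 0"
          by (simp add: algebra_simps sum_subtractf)
      qed
      then show ?thesis by simp
    qed
  qed
  then show ?thesis using Dl_nz by simp
qed

lemma Psi_unique: assumes "is_Psi n f" "is_Psi n g" shows "f = g"
proof
  fix r
  show "f r = g r"
  proof (cases "r \<le> n div 2")
    case False then show ?thesis using assms unfolding is_Psi_def by simp
  next
    case True
    show ?thesis
    proof (rule unique_gen[OF _ True])
      fix a b al be x :: int assume x: "x \<ge> 2"
      have x1: "x + 1 \<noteq> 0" "x - 1 \<noteq> 0" using x by auto
      have e: "(x + 1) ^ delta n \<noteq> 0" using x by simp
      from assms have "(x + 1) ^ delta n *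
        (\<Sum>r\<le>n div 2. ev4 (f r) a b al be * (al * x^2 + be * x * 1 + al * 1^2) ^ (n div 2 - r) * (a * x^2 + b * x * 1 + a * 1^2) ^ r)
        = (x + 1) ^ delta n *
        (\<Sum>r\<le>n div 2. ev4 (g r) a b al be * (al * x^2 + be * x * 1 + al * 1^2) ^ (n div 2 - r) * (a * x^2 + b * x * 1 + a * 1^2) ^ r)"
        unfolding is_Psi_def by metis
      then show "(\<Sum>r\<le>n div 2. ev4 (f r) a b al be * (al*x^2 + be*x + al)^(n div 2-r) * (a*x^2+b*x+a)^r) =
     (\<Sum>r\<le>n div 2. ev4 (g r) a b al be * (al*x^2 + be*x + al)^(n div 2-r) * (a*x^2+b*x+a)^r)"
        using e x by (simp add: x1)
    qed
  qed
qed

lemma Phi_unique: assumes "is_Phi n f" "is_Phi n g" shows "f = g"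
proof
  fix r
  show "f r = g r"
  proof (cases "r \<le> (n - 1) div 2")
    case False then show ?thesis using assms unfolding is_Phi_def by simp
  next
    case True
    show ?thesis
    proof (rule unique_gen[OF _ True])
      fix a b al be x :: int assume x: "x \<ge> 2"
      have x1: "x + 1 \<noteq> 0" "x - 1 \<noteq> 0" using x by auto
      have e: "(x - 1) * (x + 1) ^ delta (n - 1) \<noteq> 0" using x by simp
      from assms have "(x - 1) * (x + 1) ^ delta (n - 1) *
        (\<Sum>r\<le>(n - 1) div 2. ev4 (f r) a b al be * (al * x^2 + be * x * 1 + al * 1^2) ^ ((n - 1) div 2 - r) * (a * x^2 + b * x * 1 + a * 1^2) ^ r)
        = (x - 1) * (x + 1) ^ delta (n - 1) *
        (\<Sum>r\<le>(n - 1) div 2. ev4 (g r) a b al be * (al * x^2 + be * x * 1 + al * 1^2) ^ ((n - 1) div 2 - r) * (a * x^2 + b * x * 1 + a * 1^2) ^ r)"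
        unfolding is_Phi_def by metis
      then show "(\<Sum>r\<le>(n - 1) div 2. ev4 (f r) a b al be * (al*x^2 + be*x + al)^((n - 1) div 2-r) * (a*x^2+b*x+a)^r) =
     (\<Sum>r\<le>(n - 1) div 2. ev4 (g r) a b al be * (al*x^2 + be*x + al)^((n - 1) div 2-r) * (a*x^2+b*x+a)^r)"
        using e x by (simp add: x1)
    qed
  qed
qed



lemma ev4_2[simp]: "ev4 2 a b al be = 2" by (simp add: ev4_def)

lemma hev_c: "hev a b al be x y [:c:] 0 = ev4 c a b al be"
  by (simp add: hev_def)
lemma hev_Qh: "hev a b al be x y Qh 1 = (be * a - al * b) * (x^2 + y^2)"
  by (simp add: hev_def Qh_def algebra_simps power2_eq_square)
lemma hev_Ph: "hev a b al be x y Ph 1 = (be * a - al * b) * (x * y)"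
  by (simp add: hev_def Ph_def algebra_simps power2_eq_square)

lemma hev_Qh_Ph: "hev a b al be x y (Qh - Ph) 1 = (be * a - al * b) * (x^2 + y^2 - x * y)"
    "hev a b al be x y (Qh + Ph) 1 = (be * a - al * b) * (x^2 + y^2 + x * y)"
  unfolding hev_diff hev_add hev_Qh hev_Ph by (simp_all add: algebra_simps)

lemma degs: "degree Qh \<le> 1" "degree Ph \<le> 1" "degree (Qh - Ph) \<le> 1" "degree (Qh + Ph) \<le> 1"
  "degree [:c:] \<le> 0"
  by (simp_all add: Qh_def Ph_def degree_diff_le degree_add_le)

lemma two_pC: "[:2:] = (2::mpoly poly)"
proof -
  have "[:1+1:] = [:1:] + [:1::mpoly:]" by simp
  then show ?thesis by (simp add: one_pCons[symmetric] one_add_one)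
qed

lemma DDs: "DD [:1:] = 0" "DD [:2:] = 0" "DD Qh = 0" "DD (Qh - Ph) = 0" "DD (Qh + Ph) = 0"
  using DD_consts DD_Qh DD_Ph derivation.F_add[OF DD_der] derivation.F_diff[OF DD_der]
  by (simp_all add: one_pCons[symmetric] two_pC)

lemma is_Psi_even: "is_Psi (2*m) (\<lambda>r. coeff (Wr [:2:] Qh m) r)"
  unfolding is_Psi_def
proof (intro conjI allI impI)
  fix r assume "r > 2 * m div 2"
  then show "coeff (Wr [:2:] Qh m) r = 0"
    using degree_Wr[OF degs(5)[of 2] degs(1), where m=m] by (simp add: coeff_eq_0)
next
  fix a b al be x y :: int
  have s: "(x^2)^j + (y^2)^j = 1 * Wn x y 2 (x^2+y^2) j" for j
    by (rule Wn_unique[of "\<lambda>j. (x^2)^j + (y^2)^j"]) (use geo_rec[of 1 x _ 1 y] in auto)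
  have "hev a b al be x y (Wr [:2:] Qh m) m = (be * a - al * b) ^ m * Wn x y 2 (x^2+y^2) m"
    by (rule hev_Wr[OF degs(5) degs(1)]) (simp add: hev_c, rule hev_Qh)
  then show "(be * a - al * b) ^ (2 * m div 2) * (x ^ (2 * m) + y ^ (2 * m)) =
       (x + y) ^ delta (2 * m) * (\<Sum>r\<le>2 * m div 2. ev4 (coeff (Wr [:2:] Qh m) r) a b al be *
             (al * x\<^sup>2 + be * x * y + al * y\<^sup>2) ^ (2 * m div 2 - r) * (a * x\<^sup>2 + b * x * y + a * y\<^sup>2) ^ r)"
    using s[of m] by (simp add: hev_def delta_def power_mult)
qed

lemma is_Psi_odd: "is_Psi (2*m+1) (\<lambda>r. coeff (Wr [:1:] (Qh - Ph) m) r)"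
  unfolding is_Psi_def
proof (intro conjI allI impI)
  fix r assume "r > (2 * m + 1) div 2"
  then show "coeff (Wr [:1:] (Qh - Ph) m) r = 0"
    using degree_Wr[OF degs(5)[of 1] degs(3), where m=m] by (simp add: coeff_eq_0)
next
  fix a b al be x y :: int
  have s: "x * (x^2)^j + y * (y^2)^j = (x + y) * Wn x y 1 (x^2+y^2 - x*y) j" for j
    by (rule Wn_unique[of "\<lambda>j. x * (x^2)^j + y * (y^2)^j"])
       (use geo_rec[of x x _ y y] in \<open>auto simp: algebra_simps power2_eq_square\<close>)
  have hv: "hev a b al be x y (Wr [:1:] (Qh - Ph) m) m = (be * a - al * b) ^ m * Wn x y 1 (x^2+y^2 - x*y) m"
    by (rule hev_Wr[OF degs(5) degs(3)]) (simp add: hev_c, rule hev_Qh_Ph(1))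
  have L: "x ^ (2 * m + 1) + y ^ (2 * m + 1) = x * (x^2)^m + y * (y^2)^m"
    by (simp add: power_mult[symmetric])
  have d: "(2 * m + 1) div 2 = m" by simp
  have S: "(\<Sum>r\<le>m. ev4 (coeff (Wr [:1:] (Qh - Ph) m) r) a b al be *
             (al * x\<^sup>2 + be * x * y + al * y\<^sup>2) ^ (m - r) * (a * x\<^sup>2 + b * x * y + a * y\<^sup>2) ^ r) = hev a b al be x y (Wr [:1:] (Qh - Ph) m) m"
    by (simp add: hev_def)
  show "(be * a - al * b) ^ ((2 * m + 1) div 2) * (x ^ (2 * m + 1) + y ^ (2 * m + 1)) =
       (x + y) ^ delta (2 * m + 1) * (\<Sum>r\<le>(2 * m + 1) div 2. ev4 (coeff (Wr [:1:] (Qh - Ph) m) r) a b al be *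
             (al * x\<^sup>2 + be * x * y + al * y\<^sup>2) ^ ((2 * m + 1) div 2 - r) * (a * x\<^sup>2 + b * x * y + a * y\<^sup>2) ^ r)"
    unfolding d L S hv s[of m] by (simp add: delta_def)
qed

lemma is_Phi_even: "is_Phi (2*m+2) (\<lambda>r. coeff (Wr [:1:] Qh m) r)"
  unfolding is_Phi_def
proof (intro conjI allI impI)
  fix r assume "r > (2 * m + 2 - 1) div 2"
  then show "coeff (Wr [:1:] Qh m) r = 0"
    using degree_Wr[OF degs(5)[of 1] degs(1), where m=m] by (simp add: coeff_eq_0)
next
  fix a b al be x y :: int
  have s: "x^2 * (x^2)^j + (-(y^2)) * (y^2)^j = ((x - y) * (x + y)) * Wn x y 1 (x^2+y^2) j" for j
    by (rule Wn_unique[of "\<lambda>j. x^2 * (x^2)^j + (-(y^2)) * (y^2)^j"])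
       (use geo_rec[where A="x\<^sup>2" and B="-(y\<^sup>2)" and X=x and Y=y] in \<open>auto simp: algebra_simps power2_eq_square\<close>)
  have hv: "hev a b al be x y (Wr [:1:] Qh m) m = (be * a - al * b) ^ m * Wn x y 1 (x^2+y^2) m"
    by (rule hev_Wr[OF degs(5) degs(1)]) (simp add: hev_c, rule hev_Qh)
  have L: "x ^ (2 * m + 2) - y ^ (2 * m + 2) = x^2 * (x^2)^m + (-(y^2)) * (y^2)^m"
    by (simp add: power_mult[symmetric] power_add[symmetric] algebra_simps)
  have d: "(2 * m + 2 - 1) div 2 = m" by simp
  have S: "(\<Sum>r\<le>m. ev4 (coeff (Wr [:1:] Qh m) r) a b al be *
             (al * x\<^sup>2 + be * x * y + al * y\<^sup>2) ^ (m - r) * (a * x\<^sup>2 + b * x * y + a * y\<^sup>2) ^ r) = hev a b al be x y (Wr [:1:] Qh m) m"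
    by (simp add: hev_def)
  show "(be * a - al * b) ^ ((2 * m + 2 - 1) div 2) * (x ^ (2 * m + 2) - y ^ (2 * m + 2)) =
       (x - y) * (x + y) ^ delta (2 * m + 2 - 1) * (\<Sum>r\<le>(2 * m + 2 - 1) div 2. ev4 (coeff (Wr [:1:] Qh m) r) a b al be *
             (al * x\<^sup>2 + be * x * y + al * y\<^sup>2) ^ ((2 * m + 2 - 1) div 2 - r) * (a * x\<^sup>2 + b * x * y + a * y\<^sup>2) ^ r)"
    unfolding d L S hv s[of m] by (simp add: delta_def)
qed

lemma is_Phi_odd: "is_Phi (2*m+1) (\<lambda>r. coeff (Wr [:1:] (Qh + Ph) m) r)"
  unfolding is_Phi_def
proof (intro conjI allI impI)
  fix r assume "r > (2 * m + 1 - 1) div 2"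
  then show "coeff (Wr [:1:] (Qh + Ph) m) r = 0"
    using degree_Wr[OF degs(5)[of 1] degs(4), where m=m] by (simp add: coeff_eq_0)
next
  fix a b al be x y :: int
  have s: "x * (x^2)^j + (- y) * (y^2)^j = (x - y) * Wn x y 1 (x^2+y^2 + x*y) j" for j
    by (rule Wn_unique[of "\<lambda>j. x * (x^2)^j + (- y) * (y^2)^j"])
       (use geo_rec[of x x _ "- y" y] in \<open>auto simp: algebra_simps power2_eq_square\<close>)
  have hv: "hev a b al be x y (Wr [:1:] (Qh + Ph) m) m = (be * a - al * b) ^ m * Wn x y 1 (x^2+y^2 + x*y) m"
    by (rule hev_Wr[OF degs(5) degs(4)]) (simp add: hev_c, rule hev_Qh_Ph(2))
  have L: "x ^ (2 * m + 1) - y ^ (2 * m + 1) = x * (x^2)^m + (- y) * (y^2)^m"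
    by (simp add: power_mult[symmetric] algebra_simps)
  have d: "(2 * m + 1 - 1) div 2 = m" by simp
  have S: "(\<Sum>r\<le>m. ev4 (coeff (Wr [:1:] (Qh + Ph) m) r) a b al be *
             (al * x\<^sup>2 + be * x * y + al * y\<^sup>2) ^ (m - r) * (a * x\<^sup>2 + b * x * y + a * y\<^sup>2) ^ r) = hev a b al be x y (Wr [:1:] (Qh + Ph) m) m"
    by (simp add: hev_def)
  show "(be * a - al * b) ^ ((2 * m + 1 - 1) div 2) * (x ^ (2 * m + 1) - y ^ (2 * m + 1)) =
       (x - y) * (x + y) ^ delta (2 * m + 1 - 1) * (\<Sum>r\<le>(2 * m + 1 - 1) div 2. ev4 (coeff (Wr [:1:] (Qh + Ph) m) r) a b al be *
             (al * x\<^sup>2 + be * x * y + al * y\<^sup>2) ^ ((2 * m + 1 - 1) div 2 - r) * (a * x\<^sup>2 + b * x * y + a * y\<^sup>2) ^ r)"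
    unfolding d L S hv s[of m] by (simp add: delta_def)
qed



lemma Psi_even: "Psi (2*m) = (\<lambda>r. coeff (Wr [:2:] Qh m) r)"
  unfolding Psi_def by (rule the_equality) (rule is_Psi_even, rule Psi_unique[OF _ is_Psi_even])
lemma Psi_odd: "Psi (2*m+1) = (\<lambda>r. coeff (Wr [:1:] (Qh - Ph) m) r)"
  unfolding Psi_def by (rule the_equality) (rule is_Psi_odd, rule Psi_unique[OF _ is_Psi_odd])
lemma Phi_even: "Phi (2*m+2) = (\<lambda>r. coeff (Wr [:1:] Qh m) r)"
  unfolding Phi_def by (rule the_equality) (rule is_Phi_even, rule Phi_unique[OF _ is_Phi_even])
lemma Phi_odd: "Phi (2*m+1) = (\<lambda>r. coeff (Wr [:1:] (Qh + Ph) m) r)"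
  unfolding Phi_def by (rule the_equality) (rule is_Phi_odd, rule Phi_unique[OF _ is_Phi_odd])

lemma Psi_rel: assumes r: "1 \<le> r" shows "of_nat r * Psi n r = - Dop (Psi n (r - 1))"
proof (cases "even n")
  case True
  then obtain m where n: "n = 2 * m" by blast
  show ?thesis by (simp only: n Psi_even) (rule Wr_rel[OF DDs(2) DDs(3) r])
next
  case False
  then obtain m where n: "n = 2 * m + 1" using oddE by blast
  show ?thesis by (simp only: n Psi_odd) (rule Wr_rel[OF DDs(1) DDs(4) r])
qed

lemma Phi_rel: assumes "1 \<le> n" and r: "1 \<le> r" shows "of_nat r * Phi n r = - Dop (Phi n (r - 1))"
proof (cases "even n")
  case True
  from True obtain k where k: "n = 2 * k" by blast
  with \<open>1 \<le> n\<close> have "n = 2 * (k - 1) + 2" by simp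
  then obtain m where n: "n = 2 * m + 2" by blast
  show ?thesis by (simp only: n Phi_even) (rule Wr_rel[OF DDs(1) DDs(3) r])
next
  case False
  then obtain m where n: "n = 2 * m + 1" using oddE by blast
  show ?thesis by (simp only: n Phi_odd) (rule Wr_rel[OF DDs(1) DDs(5) r])
qed

theorem theorem8p1:
  fixes n :: nat
  assumes "n \<ge> 1"
  shows "(\<forall>r. 1 \<le> r \<and> r \<le> n div 2 \<longrightarrow>
            of_nat r * Psi n r = - Dop (Psi n (r - 1))) \<and>
         (\<forall>r. 1 \<le> r \<and> r \<le> (n - 1) div 2 \<longrightarrow>
            of_nat r * Phi n r = - Dop (Phi n (r - 1)))"
  using Psi_rel Phi_rel[OF assms] by blast


end
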